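(* Let $k$ be a positive integer and let $G$ be a $2k$-connected $(P_2\cup kP_1)$-free graph. Let $u,v$ be distinct vertices of $G$ and let $P$ be a longest $(u,v)$-path in $G$. Then every component of $G-V(P)$ consists of a single vertex; equivalently, $V(G)\setminus V(P)$ is an independent set.
   Context: All graphs are finite and simple. For a graph $H$, a graph $G$ is $H$-free if $G$ contains no induced subgraph isomorphic to $H$; $P_2\cup kP_1$ is the disjoint union of an edge and $k$ isolated vertices. A $(u,v)$-path is a path with endpoints $u$ and $v$. *)

theory Defs
  imports Main
begin

definition graph :: "'a set \<Rightarrow> ('a \<Rightarrow> 'a \<Rightarrow> bool) \<Rightarrow> bool" where
  "graph V E \<longleftrightarrow> finite V \<and> (\<forall>x y. E x y \<longrightarrow> x \<in> V \<and> y \<in> V)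
     \<and> (\<forall>x y. E x y \<longrightarrow> E y x) \<and> (\<forall>x. \<not> E x x)"

definition path_in :: "'a set \<Rightarrow> ('a \<Rightarrow> 'a \<Rightarrow> bool) \<Rightarrow> 'a list \<Rightarrow> bool" where
  "path_in W E xs \<longleftrightarrow> xs \<noteq> [] \<and> distinct xs \<and> set xs \<subseteq> W
     \<and> (\<forall>i. Suc i < length xs \<longrightarrow> E (xs ! i) (xs ! Suc i))"

definition uv_path :: "'a set \<Rightarrow> ('a \<Rightarrow> 'a \<Rightarrow> bool) \<Rightarrow> 'a \<Rightarrow> 'a \<Rightarrow> 'a list \<Rightarrow> bool" where
  "uv_path V E u v xs \<longleftrightarrow> path_in V E xs \<and> hd xs = u \<and> last xs = v"

definition longest_uv_path :: "'a set \<Rightarrow> ('a \<Rightarrow> 'a \<Rightarrow> bool) \<Rightarrow> 'a \<Rightarrow> 'a \<Rightarrow> 'a list \<Rightarrow> bool" where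
  "longest_uv_path V E u v xs \<longleftrightarrow> uv_path V E u v xs
     \<and> (\<forall>ys. uv_path V E u v ys \<longrightarrow> length ys \<le> length xs)"

definition connected_on :: "'a set \<Rightarrow> ('a \<Rightarrow> 'a \<Rightarrow> bool) \<Rightarrow> bool" where
  "connected_on W E \<longleftrightarrow> W \<noteq> {} \<and>
     (\<forall>x\<in>W. \<forall>y\<in>W. \<exists>xs. path_in W E xs \<and> hd xs = x \<and> last xs = y)"

definition k_connected :: "'a set \<Rightarrow> ('a \<Rightarrow> 'a \<Rightarrow> bool) \<Rightarrow> nat \<Rightarrow> bool" where
  "k_connected V E k \<longleftrightarrow> card V > k \<and>
     (\<forall>S. S \<subseteq> V \<and> card S < k \<longrightarrow> connected_on (V - S) E)"

text \<open>(P_2 \<union> kP_1)-free: no induced subgraph consisting of an edge ab plus k further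
  vertices that are pairwise nonadjacent and nonadjacent to a and b.\<close>
definition P2_kP1_free :: "'a set \<Rightarrow> ('a \<Rightarrow> 'a \<Rightarrow> bool) \<Rightarrow> nat \<Rightarrow> bool" where
  "P2_kP1_free V E k \<longleftrightarrow> \<not> (\<exists>a b S. a \<in> V \<and> b \<in> V \<and> E a b \<and> S \<subseteq> V - {a, b}
     \<and> card S = k \<and> (\<forall>x\<in>S. \<forall>y\<in>S. \<not> E x y) \<and> (\<forall>x\<in>S. \<not> E x a \<and> \<not> E x b))"

end

theory Submission
  imports Defs
begin


fun walk :: "'a set \<Rightarrow> ('a \<Rightarrow> 'a \<Rightarrow> bool) \<Rightarrow> 'a list \<Rightarrow> bool" where
  "walk W E [] = False"
| "walk W E [x] = (x \<in> W)"
| "walk W E (x # y # xs) = (x \<in> W \<and> E x y \<and> walk W E (y # xs))"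

lemma walk_iff: "walk W E xs \<longleftrightarrow> xs \<noteq> [] \<and> set xs \<subseteq> W \<and> (\<forall>i. Suc i < length xs \<longrightarrow> E (xs ! i) (xs ! Suc i))"
proof (induction W E xs rule: walk.induct)
  case (3 W E x y xs)
  have "(\<forall>i. Suc i < length (x # y # xs) \<longrightarrow> E ((x # y # xs) ! i) ((x # y # xs) ! Suc i))
      \<longleftrightarrow> E x y \<and> (\<forall>i. Suc i < length (y # xs) \<longrightarrow> E ((y # xs) ! i) ((y # xs) ! Suc i))"
    (is "?L \<longleftrightarrow> ?R")
  proof
    assume ?L
    then show ?R by (metis Suc_less_eq length_Cons nth_Cons_0 nth_Cons_Suc zero_less_Suc)
  next
    assume r: ?R
    show ?L
    proof (intro allI impI)
      fix i assume "Suc i < length (x # y # xs)"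
      then show "E ((x # y # xs) ! i) ((x # y # xs) ! Suc i)" using r by (cases i) auto
    qed
  qed
  then show ?case using "3.IH" by auto
qed auto

lemma path_in_walk: "path_in W E xs \<longleftrightarrow> walk W E xs \<and> distinct xs"
  unfolding path_in_def walk_iff by auto

lemma walk_overlap: "walk W E (xs @ y # ys) \<longleftrightarrow> walk W E (xs @ [y]) \<and> walk W E (y # ys)"
proof (induction xs)
  case Nil
  then show ?case by (cases ys) auto
next
  case (Cons a xs)
  then show ?case by (cases xs) auto
qed

lemma walk_append: "xs \<noteq> [] \<Longrightarrow> ys \<noteq> [] \<Longrightarrow>
   walk W E (xs @ ys) \<longleftrightarrow> walk W E xs \<and> walk W E ys \<and> E (last xs) (hd ys)"
proof (induction xs)
  case Nil then show ?case by simp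
next
  case (Cons a xs)
  then show ?case by (cases xs; cases ys) auto
qed

lemma walk_rev:
  assumes s: "\<forall>x y. E x y \<longrightarrow> E y x"
  shows "walk W E xs \<Longrightarrow> walk W E (rev xs)"
proof (induction xs)
  case Nil then show ?case by simp
next
  case (Cons a xs)
  show ?case
  proof (cases xs)
    case Nil then show ?thesis using Cons.prems by simp
  next
    case (Cons b ys)
    have wx: "walk W E xs" using Cons.prems \<open>xs = b # ys\<close> by simp
    have "walk W E (rev xs)" using Cons.IH[OF wx] .
    moreover have "a \<in> W" "E a b" using Cons.prems \<open>xs = b # ys\<close> by auto
    moreover have "E b a" using s \<open>E a b\<close> by blast
    ultimately have "walk W E (rev xs @ [a])"
      using \<open>xs = b # ys\<close> walk_append[of "rev xs" "[a]" W E] by (simp add: last_rev)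
    then show ?thesis by simp
  qed
qed

lemma walk_mono: "walk W E xs \<Longrightarrow> W \<subseteq> W' \<Longrightarrow> walk W' E xs"
  by (induction W E xs rule: walk.induct) auto

lemma walk_to_path: "walk W E xs \<Longrightarrow> \<exists>ys. path_in W E ys \<and> hd ys = hd xs \<and> last ys = last xs \<and> set ys \<subseteq> set xs"
proof (induction "length xs" arbitrary: xs rule: less_induct)
  case less
  show ?case
  proof (cases "distinct xs")
    case True then show ?thesis using less.prems by (auto simp: path_in_walk)
  next
    case False
    then obtain as bs cs c where xs: "xs = as @ [c] @ bs @ [c] @ cs" using not_distinct_decomp by blast
    have w: "walk W E (as @ c # ((bs @ [c]) @ cs))" using less.prems xs by simp
    have w1: "walk W E (as @ [c])" and w2: "walk W E (c # (bs @ [c]) @ cs)"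
      using walk_overlap[of W E as c "(bs @ [c]) @ cs"] w by blast+
    have "walk W E ((c # bs) @ c # cs)" using w2 by simp
    hence "walk W E (c # cs)" using walk_overlap[of W E "c # bs" c cs] by blast
    hence w3: "walk W E (as @ c # cs)" using w1 walk_overlap[of W E as c cs] by blast
    have "length (as @ c # cs) < length xs" using xs by simp
    from less.hyps[OF this w3] obtain ys where
      p: "path_in W E ys" "hd ys = hd (as @ c # cs)" "last ys = last (as @ c # cs)" "set ys \<subseteq> set (as @ c # cs)"
      by blast
    have h: "hd (as @ c # cs) = hd xs" using xs by (cases as) simp_all
    have l: "last (as @ c # cs) = last xs" using xs by simp
    have st: "set (as @ c # cs) \<subseteq> set xs" using xs by auto
    have "set ys \<subseteq> set xs" using p(4) st by (rule order_trans)
    then show ?thesis using p(1-3) h l by (intro exI[of _ ys]) simp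
  qed
qed

lemma crossing: "xs \<noteq> [] \<Longrightarrow> hd xs \<in> A \<Longrightarrow> last xs \<notin> A \<Longrightarrow>
   \<exists>t. Suc t < length xs \<and> xs ! t \<in> A \<and> xs ! Suc t \<notin> A"
proof (induction xs)
  case Nil then show ?case by simp
next
  case (Cons a xs)
  show ?case
  proof (cases "xs = []")
    case True then show ?thesis using Cons by simp
  next
    case False
    show ?thesis
    proof (cases "hd xs \<in> A")
      case True
      then obtain t where "Suc t < length xs" "xs ! t \<in> A" "xs ! Suc t \<notin> A" using Cons False by auto
      then show ?thesis by (intro exI[of _ "Suc t"]) auto
    next
      case f: False
      then show ?thesis using Cons False by (intro exI[of _ 0]) (auto simp: hd_conv_nth)
    qed
  qed
qed



lemma walk_ne: "walk W E xs \<Longrightarrow> xs \<noteq> []" by (cases xs) auto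

lemma detour1:
  assumes P: "walk V E P" "distinct P" "Suc i < length P"
    and q: "walk V E q" "distinct q" "set q \<inter> set P = {}"
    and e1: "E (P!i) (hd q)" and e2: "E (last q) (P!Suc i)"
  shows "path_in V E (take (Suc i) P @ q @ drop (Suc i) P) \<and> hd (take (Suc i) P @ q @ drop (Suc i) P) = hd P
    \<and> last (take (Suc i) P @ q @ drop (Suc i) P) = last P \<and> length (take (Suc i) P @ q @ drop (Suc i) P) = length P + length q"
proof -
  let ?A = "take (Suc i) P" and ?C = "drop (Suc i) P"
  have ne: "?A \<noteq> []" "?C \<noteq> []" "q \<noteq> []" using P q walk_ne by auto
  have "walk V E (?A @ ?C)" using P by simp
  hence wA: "walk V E ?A" and wC: "walk V E ?C" using walk_append[OF ne(1,2), of V E] by blast+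
  have lA: "last ?A = P!i" using P by (simp add: take_Suc_conv_app_nth)
  have hC: "hd ?C = P!Suc i" using P by (simp add: hd_drop_conv_nth)
  have wqC: "walk V E (q @ ?C)" using walk_append[OF ne(3,2), of V E] q(1) wC e2 hC by simp
  have neqC: "q @ ?C \<noteq> []" using ne by simp
  have w: "walk V E (?A @ q @ ?C)" using walk_append[OF ne(1) neqC, of V E] wA wqC lA e1 ne(3) by simp
  have dAC: "distinct (?A @ ?C)" by (simp only: append_take_drop_id) (rule P(2))
  hence dAC': "distinct ?A" "distinct ?C" "set ?A \<inter> set ?C = {}" unfolding distinct_append by blast+
  have sub: "set ?A \<subseteq> set P" "set ?C \<subseteq> set P" by (meson in_set_takeD in_set_dropD subsetI)+
  have i1: "set ?A \<inter> set q = {}" "set q \<inter> set ?C = {}" using sub q(3) by blast+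
  have d: "distinct (?A @ q @ ?C)" using dAC' i1 q(2) by (simp add: Int_Un_distrib Int_Un_distrib2)
  have "hd (?A @ q @ ?C) = hd P" using ne P by (cases P) auto
  moreover have "last (?A @ q @ ?C) = last P" using ne P by simp
  moreover have "length (?A @ q @ ?C) = length P + length q" using P by simp
  ultimately show ?thesis using w d by (simp add: path_in_walk)
qed

lemma detour2:
  assumes P: "walk V E P" "distinct P" "i < j" "Suc j < length P"
    and q: "walk V E q" "distinct q" "set q \<inter> set P = {}"
    and e1: "E (P!i) (hd q)" and e2: "E (last q) (P!j)" and e3: "E (P!Suc i) (P!Suc j)"
    and sym: "\<forall>x y. E x y \<longrightarrow> E y x"
  shows "\<exists>R. path_in V E R \<and> hd R = hd P \<and> last R = last P \<and> length R = length P + length q"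
proof -
  let ?A = "take (Suc i) P" and ?B = "take (j - i) (drop (Suc i) P)" and ?C = "drop (Suc j) P"
  have PABC: "P = ?A @ ?B @ ?C"
  proof -
    have e: "drop (j-i) (drop (Suc i) P) = ?C" using P(3) by simp
    have "P = ?A @ (?B @ drop (j-i) (drop (Suc i) P))" by (simp only: append_take_drop_id)
    also have "\<dots> = ?A @ ?B @ ?C" by (simp only: e)
    finally show ?thesis .
  qed
  have lenB: "length ?B = j - i" using P by simp
  have ne: "?A \<noteq> []" "?B \<noteq> []" "?C \<noteq> []" "q \<noteq> []" using P q walk_ne by auto
  have w0: "walk V E (?A @ ?B @ ?C)" using P(1) by (simp only: PABC[symmetric])
  have neBC: "?B @ ?C \<noteq> []" using ne by simp
  have wA: "walk V E ?A" and wBC: "walk V E (?B @ ?C)"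
    using walk_append[OF ne(1) neBC, of V E] w0 by blast+
  have wB: "walk V E ?B" and wC: "walk V E ?C"
    using walk_append[OF ne(2,3), of V E] wBC by blast+
  have lA: "last ?A = P!i" using P by (simp add: take_Suc_conv_app_nth)
  have hB: "hd ?B = P!Suc i" using P ne by (simp add: hd_drop_conv_nth)
  have lB: "last ?B = P!j"
  proof -
    have "last ?B = ?B ! (j - i - 1)" using ne lenB by (simp add: last_conv_nth)
    also have "\<dots> = P ! (Suc i + (j - i - 1))" using P by (simp add: nth_drop)
    also have "Suc i + (j - i - 1) = j" using P by simp
    finally show ?thesis .
  qed
  have hC: "hd ?C = P!Suc j" using P by (simp add: hd_drop_conv_nth)
  have wrB: "walk V E (rev ?B)" using walk_rev[OF sym wB] .
  have nrB: "rev ?B \<noteq> []" using ne by simp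
  have w1: "walk V E (rev ?B @ ?C)" using walk_append[OF nrB ne(3), of V E] wrB wC hC e3 hB ne(2)
    by (simp add: last_rev)
  have ne2: "rev ?B @ ?C \<noteq> []" using ne by simp
  have w2: "walk V E (q @ rev ?B @ ?C)" using walk_append[OF ne(4) ne2, of V E] q(1) w1 e2 lB ne(2)
    by (simp add: hd_rev)
  have ne3: "q @ rev ?B @ ?C \<noteq> []" using ne by simp
  have w: "walk V E (?A @ q @ rev ?B @ ?C)" using walk_append[OF ne(1) ne3, of V E] wA w2 lA e1 ne(4) by simp
  have dABC: "distinct (?A @ ?B @ ?C)" using P(2) by (simp only: PABC[symmetric])
  have sub: "set ?A \<subseteq> set P" "set ?B \<subseteq> set P" "set ?C \<subseteq> set P"
    by (meson in_set_takeD in_set_dropD subsetI)+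
  have "distinct ?A" "distinct ?B" "distinct ?C" "set ?A \<inter> set ?B = {}"
     "set ?A \<inter> set ?C = {}" "set ?B \<inter> set ?C = {}"
    using dABC unfolding distinct_append set_append by blast+
    note dd = this
  have i1: "set ?A \<inter> set q = {}" "set q \<inter> set ?B = {}" "set q \<inter> set ?C = {}"
    using sub q(3) by blast+
  have d: "distinct (?A @ q @ rev ?B @ ?C)" using dd i1 q(2)
    by (simp add: Int_Un_distrib Int_Un_distrib2 Int_commute)
  have "hd (?A @ q @ rev ?B @ ?C) = hd P" using ne(1) by simp
  moreover have "last (?A @ q @ rev ?B @ ?C) = last P"
  proof -
    have "last (?A @ q @ rev ?B @ ?C) = last ?C" using ne(3) by simp
    then show ?thesis using last_drop[OF \<open>Suc j < length P\<close>] by simp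
  qed
  moreover have "length (?A @ q @ rev ?B @ ?C) = length P + length q"
  proof -
    have lP: "length (?A @ ?B @ ?C) = length P" by (simp only: PABC[symmetric])
    have "length (?A @ q @ rev ?B @ ?C) = length (?A @ ?B @ ?C) + length q" by simp
    also have "\<dots> = length P + length q" by (simp only: lP)
    finally show ?thesis .
  qed
  ultimately show ?thesis using w d by (auto simp: path_in_walk)
qed


theorem mainTheorem4:
  fixes V :: "'a set" and E :: "'a \<Rightarrow> 'a \<Rightarrow> bool" and k :: nat and u v :: 'a and P :: "'a list"
  assumes "graph V E" and "k \<ge> 1"
    and "k_connected V E (2 * k)"
    and "P2_kP1_free V E k"
    and "u \<in> V" and "v \<in> V" and "u \<noteq> v"
    and "longest_uv_path V E u v P"
  shows "\<forall>x \<in> V - set P. \<forall>y \<in> V - set P. \<not> E x y"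
proof (intro ballI notI)
  fix x y assume x: "x \<in> V - set P" and y: "y \<in> V - set P" and exy: "E x y"
  have sym: "\<forall>a b. E a b \<longrightarrow> E b a" using assms(1) unfolding graph_def by blast
  have irr: "\<And>a. \<not> E a a" using assms(1) unfolding graph_def by blast
  have Pp: "path_in V E P" "hd P = u" "last P = v"
    using assms(8) unfolding longest_uv_path_def uv_path_def by auto
  have Plong: "\<And>ys. uv_path V E u v ys \<Longrightarrow> length ys \<le> length P"
    using assms(8) unfolding longest_uv_path_def by auto
  have wP: "walk V E P" "distinct P" using Pp(1) path_in_walk by blast+
  have PV: "set P \<subseteq> V" using Pp(1) unfolding path_in_def by blast
  define m where "m = length P"
  have Pne: "P \<noteq> []" using wP walk_ne by blast
  have m2: "2 \<le> m"
  proof (rule ccontr)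
    assume "\<not> 2 \<le> m"
    then have "length P = 1" using Pne m_def by (cases P) (auto simp: not_le)
    then have "hd P = last P" by (cases P) auto
    then show False using Pp assms(7) by simp
  qed
  define W where "W = V - set P"
  define H where "H = {z. \<exists>ws. walk W E ws \<and> hd ws = x \<and> last ws = z}"
  have xW: "x \<in> W" and yW: "y \<in> W" using x y W_def by auto
  have xH: "x \<in> H" unfolding H_def using xW by (intro CollectI exI[of _ "[x]"]) simp
  have yH: "y \<in> H" unfolding H_def using xW yW exy by (intro CollectI exI[of _ "[x,y]"]) simp
  have HW: "H \<subseteq> W"
  proof
    fix z assume "z \<in> H"
    then obtain ws where "walk W E ws" "last ws = z" unfolding H_def by blast
    then show "z \<in> W" using walk_iff[of W E ws] last_in_set[of ws] by auto
  qed
  have Hext: "\<And>a z. a \<in> H \<Longrightarrow> z \<in> W \<Longrightarrow> E a z \<Longrightarrow> z \<in> H"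
  proof -
    fix a z assume a: "a \<in> H" and z: "z \<in> W" and e: "E a z"
    then obtain ws where ws: "walk W E ws" "hd ws = x" "last ws = a" unfolding H_def by blast
    have ne: "ws \<noteq> []" using ws walk_ne by blast
    have "walk W E (ws @ [z])" using walk_append[OF ne, of "[z]" W E] ws z e by simp
    moreover have "hd (ws @ [z]) = x" using ne ws by simp
    ultimately show "z \<in> H" unfolding H_def by auto
  qed
  have Hpath: "\<And>a b. a \<in> H \<Longrightarrow> b \<in> H \<Longrightarrow> \<exists>q. walk V E q \<and> distinct q \<and> set q \<inter> set P = {} \<and> hd q = a \<and> last q = b"
  proof -
    fix a b assume a: "a \<in> H" and b: "b \<in> H"
    obtain wa where wa: "walk W E wa" "hd wa = x" "last wa = a" using a unfolding H_def by blast
    obtain wb where wb: "walk W E wb" "hd wb = x" "last wb = b" using b unfolding H_def by blast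
    obtain ta where ta: "wa = x # ta" using wa walk_ne by (cases wa) auto
    obtain tb where tb: "wb = x # tb" using wb walk_ne by (cases wb) auto
    have "walk W E (rev wa)" using walk_rev[OF sym wa(1)] .
    hence w1: "walk W E (rev ta @ [x])" using ta by simp
    have w2: "walk W E (x # tb)" using wb tb by simp
    have w: "walk W E (rev ta @ x # tb)" using walk_overlap[of W E "rev ta" x tb] w1 w2 by blast
    have h: "hd (rev ta @ x # tb) = a" using wa ta by (cases ta rule: rev_cases) auto
    have l: "last (rev ta @ x # tb) = b" using wb tb by simp
    obtain q where q: "path_in W E q" "hd q = a" "last q = b"
      using walk_to_path[OF w] h l by auto
    have "walk W E q" "distinct q" using q(1) path_in_walk by blast+
    moreover have "W \<subseteq> V" using W_def by blast
    ultimately have "walk V E q" using walk_mono by blast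
    moreover have "set q \<inter> set P = {}" using q(1) W_def unfolding path_in_def by blast
    ultimately show "\<exists>q. walk V E q \<and> distinct q \<and> set q \<inter> set P = {} \<and> hd q = a \<and> last q = b"
      using q \<open>distinct q\<close> by blast
  qed
  define N where "N = {i. i < m \<and> (\<exists>a\<in>H. E (P!i) a)}"
  have L1: "\<And>i. i \<in> N \<Longrightarrow> Suc i < m \<Longrightarrow> Suc i \<notin> N"
  proof
    fix i assume i: "i \<in> N" "Suc i < m" "Suc i \<in> N"
    obtain a where a: "a \<in> H" "E (P!i) a" using i(1) N_def by blast
    obtain b where b: "b \<in> H" "E (P!Suc i) b" using i(3) N_def by blast
    obtain q where q: "walk V E q" "distinct q" "set q \<inter> set P = {}" "hd q = a" "last q = b"
      using Hpath[OF a(1) b(1)] by blast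
    have e2: "E (last q) (P!Suc i)" using b(2) sym q(5) by blast
    have D: "path_in V E (take (Suc i) P @ q @ drop (Suc i) P) \<and> hd (take (Suc i) P @ q @ drop (Suc i) P) = hd P
    \<and> last (take (Suc i) P @ q @ drop (Suc i) P) = last P \<and> length (take (Suc i) P @ q @ drop (Suc i) P) = length P + length q"
      using detour1[OF wP i(2)[unfolded m_def] q(1-3)] a(2) q(4) e2 by blast
    hence "uv_path V E u v (take (Suc i) P @ q @ drop (Suc i) P)" using Pp unfolding uv_path_def by simp
    hence "length P + length q \<le> length P" using Plong D by metis
    moreover have "q \<noteq> []" using q(1) walk_ne by blast
    ultimately show False by simp
  qed
  have L3: "\<And>i a. i \<in> N \<Longrightarrow> Suc i < m \<Longrightarrow> a \<in> H \<Longrightarrow> \<not> E (P!Suc i) a"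
    using L1 N_def by blast
  have L2: "\<And>i j. i \<in> N \<Longrightarrow> j \<in> N \<Longrightarrow> i < j \<Longrightarrow> Suc j < m \<Longrightarrow> \<not> E (P!Suc i) (P!Suc j)"
  proof
    fix i j assume i: "i \<in> N" "j \<in> N" "i < j" "Suc j < m" "E (P!Suc i) (P!Suc j)"
    obtain a where a: "a \<in> H" "E (P!i) a" using i(1) N_def by blast
    obtain b where b: "b \<in> H" "E (P!j) b" using i(2) N_def by blast
    obtain q where q: "walk V E q" "distinct q" "set q \<inter> set P = {}" "hd q = a" "last q = b"
      using Hpath[OF a(1) b(1)] by blast
    have e2: "E (last q) (P!j)" using b(2) sym q(5) by blast
    obtain R where R: "path_in V E R" "hd R = hd P" "last R = last P" "length R = length P + length q"
      using detour2[OF wP i(3) i(4)[unfolded m_def] q(1-3) _ e2 i(5) sym] a(2) q(4) by blast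
    hence "uv_path V E u v R" using Pp unfolding uv_path_def by simp
    hence "length P + length q \<le> length P" using Plong R by metis
    moreover have "q \<noteq> []" using q(1) walk_ne by blast
    ultimately show False by simp
  qed
  have finN: "finite N" unfolding N_def by simp
  have L4: "k \<le> card (N - {m-1})"
  proof (rule ccontr)
    assume "\<not> k \<le> card (N - {m-1})"
    hence c1: "card (N - {m-1}) < k" by simp
    have "card N \<le> card (N - {m-1}) + 1"
      using finN by (cases "m-1 \<in> N") (simp_all add: card_Diff_singleton)
    define S where "S = (\<lambda>i. P!i) ` N"
    have "card S \<le> card N" unfolding S_def using finN card_image_le by blast
    hence cS: "card S < 2 * k" using c1 \<open>card N \<le> card (N - {m-1}) + 1\<close> assms(2) by linarith
    have SP: "S \<subseteq> set P" unfolding S_def N_def m_def by auto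
    hence "S \<subseteq> V" using PV by blast
    hence conn: "connected_on (V - S) E" using assms(3) cS unfolding k_connected_def by blast
    obtain j where j: "j < m" "j \<notin> N"
    proof (cases "0 \<in> N")
      case True
      then have "1 \<notin> N" using L1[of 0] m2 by simp
      moreover have "(1::nat) < m" using m2 by simp
      ultimately show ?thesis using that by blast
    next
      case False
      moreover have "(0::nat) < m" using m2 by simp
      ultimately show ?thesis using that by blast
    qed
    have PjS: "P!j \<notin> S"
    proof
      assume "P!j \<in> S"
      then obtain i where "i \<in> N" "P!i = P!j" unfolding S_def by (metis imageE)
      moreover have "i < m" using \<open>i \<in> N\<close> N_def by blast
      ultimately have "i = j" using nth_eq_iff_index_eq[OF wP(2)] j(1) m_def by metis
      then show False using \<open>i \<in> N\<close> j(2) by simp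
    qed
    have PjV: "P!j \<in> V" using PV j(1) m_def nth_mem by blast
    have xVS: "x \<in> V - S" using x SP by blast
    obtain q where q: "path_in (V - S) E q" "hd q = x" "last q = P!j"
      using conn xVS PjV PjS unfolding connected_on_def by blast
    have qne: "q \<noteq> []" using q(1) unfolding path_in_def by blast
    have "P!j \<notin> H" using HW W_def j(1) m_def nth_mem by blast
    then obtain t where t: "Suc t < length q" "q!t \<in> H" "q!Suc t \<notin> H"
      using crossing[OF qne, of H] q xH by auto
    have eqt: "E (q!t) (q!Suc t)" using q(1) t(1) unfolding path_in_def by blast
    have zVS: "q!Suc t \<in> V - S" using q(1) t(1) nth_mem unfolding path_in_def by blast
    show False
    proof (cases "q!Suc t \<in> set P")
      case True
      then obtain i where i: "i < m" "P!i = q!Suc t" using in_set_conv_nth m_def by metis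
      have "E (P!i) (q!t)" using eqt i(2) sym by metis
      hence "i \<in> N" using i(1) t(2) N_def by blast
      hence "q!Suc t \<in> S" using i(2) unfolding S_def by (metis image_eqI)
      then show False using zVS by blast
    next
      case False
      hence "q!Suc t \<in> W" using zVS W_def by blast
      then show False using Hext[OF t(2) _ eqt] t(3) by blast
    qed
  qed
  obtain K where K: "K \<subseteq> N - {m-1}" "card K = k" "finite K"
    using obtain_subset_with_card_n[OF L4] by blast
  have Kp: "\<And>i. i \<in> K \<Longrightarrow> i \<in> N \<and> Suc i < m"
  proof -
    fix i assume "i \<in> K"
    hence "i \<in> N" "i \<noteq> m - 1" using K(1) by auto
    moreover have "i < m" using \<open>i \<in> N\<close> N_def by blast
    ultimately show "i \<in> N \<and> Suc i < m" by simp
  qed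
  define S where "S = (\<lambda>i. P!Suc i) ` K"
  have inj: "inj_on (\<lambda>i. P!Suc i) K"
  proof (rule inj_onI)
    fix i j assume "i \<in> K" "j \<in> K" "P!Suc i = P!Suc j"
    then show "i = j" using Kp nth_eq_iff_index_eq[OF wP(2)] m_def by (metis Suc_inject)
  qed
  have cardS: "card S = k" unfolding S_def using card_image[OF inj] K(2) by simp
  have SV: "S \<subseteq> V - {x, y}"
  proof
    fix s assume "s \<in> S"
    then obtain i where i: "i \<in> K" "s = P!Suc i" unfolding S_def by blast
    hence "s \<in> set P" using Kp m_def nth_mem by blast
    then show "s \<in> V - {x, y}" using PV x y by blast
  qed
  have indep: "\<forall>s\<in>S. \<forall>s'\<in>S. \<not> E s s'"
  proof (intro ballI)
    fix s s' assume "s \<in> S" "s' \<in> S"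
    then obtain i j where i: "i \<in> K" "s = P!Suc i" and j: "j \<in> K" "s' = P!Suc j" unfolding S_def by blast
    show "\<not> E s s'"
    proof (cases i j rule: linorder_cases)
      case less
      then show ?thesis using L2[of i j] Kp i j by blast
    next
      case equal
      then show ?thesis using irr i j by simp
    next
      case greater
      then show ?thesis using L2[of j i] Kp i j sym by blast
    qed
  qed
  have nonadj: "\<forall>s\<in>S. \<not> E s x \<and> \<not> E s y"
  proof
    fix s assume "s \<in> S"
    then obtain i where i: "i \<in> K" "s = P!Suc i" unfolding S_def by blast
    then show "\<not> E s x \<and> \<not> E s y" using L3[of i x] L3[of i y] Kp xH yH by blast
  qed
  have "x \<in> V" "y \<in> V" using x y by auto
  then show False using assms(4) exy SV cardS indep nonadj unfolding P2_kP1_free_def by blast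
qed

end
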